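(* Let $K$ be any real number field and let $a',b'$ be arbitrary nonzero elements of $K$. Then there exist a generator $g'$ of $K$ (i.e. $\mathbb{Q}(g')=K$) and $x,y,z\in K$ such that $$a'x^2 + b'y^2 - a'b'z^2 = g'.$$
   Context: A real number field is a field $K\subset\mathbb{R}$ with $[K:\mathbb{Q}]<\infty$. *)

theory Defs
  imports Complex_Main
begin

definition subfield_of_real :: "real set \<Rightarrow> bool" where
  "subfield_of_real K \<longleftrightarrow>
     0 \<in> K \<and> 1 \<in> K \<and>
     (\<forall>x\<in>K. \<forall>y\<in>K. x + y \<in> K \<and> x * y \<in> K) \<and>
     (\<forall>x\<in>K. - x \<in> K) \<and>
     (\<forall>x\<in>K. x \<noteq> 0 \<longrightarrow> inverse x \<in> K)"

definition finite_over_rat :: "real set \<Rightarrow> bool" where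
  "finite_over_rat K \<longleftrightarrow>
     (\<exists>B. finite B \<and> B \<subseteq> K \<and>
          K = {\<Sum>b\<in>B. of_rat (c b) * b | c :: real \<Rightarrow> rat. True})"

definition real_number_field :: "real set \<Rightarrow> bool" where
  "real_number_field K \<longleftrightarrow> subfield_of_real K \<and> finite_over_rat K"

definition generated_subfield :: "real \<Rightarrow> real set" where
  "generated_subfield g = \<Inter>{F. subfield_of_real F \<and> g \<in> F}"

end

theory Submission imports Defs "HOL-Computational_Algebra.Fundamental_Theorem_Algebra" begin

lemma sf_0: "subfield_of_real F \<Longrightarrow> 0 \<in> F" by (simp add: subfield_of_real_def)
lemma sf_1: "subfield_of_real F \<Longrightarrow> 1 \<in> F" by (simp add: subfield_of_real_def)
lemma sf_add: "subfield_of_real F \<Longrightarrow> x \<in> F \<Longrightarrow> y \<in> F \<Longrightarrow> x + y \<in> F" by (simp add: subfield_of_real_def)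
lemma sf_mult: "subfield_of_real F \<Longrightarrow> x \<in> F \<Longrightarrow> y \<in> F \<Longrightarrow> x * y \<in> F" by (simp add: subfield_of_real_def)
lemma sf_uminus: "subfield_of_real F \<Longrightarrow> x \<in> F \<Longrightarrow> - x \<in> F" by (simp add: subfield_of_real_def)
lemma sf_inverse: "subfield_of_real F \<Longrightarrow> x \<in> F \<Longrightarrow> inverse x \<in> F"
  by (cases "x = 0") (auto simp: subfield_of_real_def)
lemma sf_diff: "subfield_of_real F \<Longrightarrow> x \<in> F \<Longrightarrow> y \<in> F \<Longrightarrow> x - y \<in> F"
  using sf_add[of F x "-y"] sf_uminus by auto
lemma sf_divide: "subfield_of_real F \<Longrightarrow> x \<in> F \<Longrightarrow> y \<in> F \<Longrightarrow> x / y \<in> F"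
  using sf_mult[of F x "inverse y"] sf_inverse by (auto simp: divide_inverse)
lemma sf_of_nat: "subfield_of_real F \<Longrightarrow> of_nat n \<in> F"
  by (induction n) (auto intro: sf_add sf_0 sf_1)
lemma sf_of_int: assumes "subfield_of_real F" shows "of_int n \<in> F"
proof (cases "n \<ge> 0")
  case True
  then have "of_int n = (of_nat (nat n) :: real)" by simp
  then show ?thesis using sf_of_nat assms by metis
next
  case False
  then have "of_int n = - (of_nat (nat (-n)) :: real)" by simp
  then show ?thesis using sf_of_nat sf_uminus assms by metis
qed
lemma sf_of_rat: "subfield_of_real F \<Longrightarrow> of_rat r \<in> F"
proof -
  assume F: "subfield_of_real F"
  obtain a b where "r = Fract a b" "b > 0" by (cases r) auto
  then show ?thesis using F by (simp add: of_rat_rat sf_divide sf_of_int)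
qed
lemma sf_sum: "subfield_of_real F \<Longrightarrow> (\<And>x. x \<in> A \<Longrightarrow> f x \<in> F) \<Longrightarrow> sum f A \<in> F"
  by (induction A rule: infinite_finite_induct) (auto intro: sf_add sf_0)
lemma sf_power: "subfield_of_real F \<Longrightarrow> x \<in> F \<Longrightarrow> x ^ n \<in> F"
  by (induction n) (auto intro: sf_mult sf_1)

lemma L_subfield: "subfield_of_real (generated_subfield g)"
  unfolding generated_subfield_def subfield_of_real_def by auto
lemma L_mem: "g \<in> generated_subfield g"
  unfolding generated_subfield_def by auto
lemma L_least: "subfield_of_real F \<Longrightarrow> g \<in> F \<Longrightarrow> generated_subfield g \<subseteq> F"
  unfolding generated_subfield_def by auto


interpretation rv: vector_space "\<lambda>(q::rat) (x::real). of_rat q * x"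
  by unfold_locales (auto simp: of_rat_add of_rat_mult algebra_simps)

lemma of_real_of_rat_c: "complex_of_real (of_rat r) = of_rat r"
  by (cases r) (simp add: of_rat_rat)

lemma poly_of_real_c: "poly (map_poly complex_of_real p) (of_real x) = of_real (poly p x)"
  by (induction p) (auto simp: map_poly_pCons)

lemma poly_rat_complex:
  "poly (map_poly of_rat p) (complex_of_real x) = complex_of_real (poly (map_poly of_rat p) x)"
proof -
  have "map_poly (of_rat :: rat \<Rightarrow> complex) p = map_poly complex_of_real (map_poly of_rat p)"
    by (rule poly_eqI) (simp add: coeff_map_poly of_real_of_rat_c)
  then show ?thesis by (simp add: poly_of_real_c)
qed

lemma mp_diff: "map_poly (of_rat :: rat \<Rightarrow> 'a::field_char_0) (p - q) = map_poly of_rat p - map_poly of_rat q"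
  by (rule poly_eqI) (simp add: coeff_map_poly of_rat_diff)
lemma mp_sum: "map_poly (of_rat :: rat \<Rightarrow> 'a::field_char_0) (sum f A) = (\<Sum>x\<in>A. map_poly of_rat (f x))"
  by (rule poly_eqI) (simp add: coeff_map_poly coeff_sum of_rat_sum)

lemma K_span:
  assumes "finite_over_rat K"
  obtains B where "finite B" "B \<subseteq> K" "K = rv.span B"
proof -
  obtain B where B: "finite B" "B \<subseteq> K" "K = {\<Sum>b\<in>B. of_rat (c b) * b | c :: real \<Rightarrow> rat. True}"
    using assms unfolding finite_over_rat_def by blast
  have "K = rv.span B" unfolding B(3) rv.span_finite[OF B(1)] by auto
  with B that show ?thesis by blast
qed

lemma algebraic_K:
  assumes K: "real_number_field K" and a: "\<alpha> \<in> K"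
  shows "\<exists>p::rat poly. p \<noteq> 0 \<and> poly (map_poly of_rat p) \<alpha> = 0"
proof -
  have sf: "subfield_of_real K" using K by (simp add: real_number_field_def)
  obtain B where B: "finite B" "B \<subseteq> K" "K = rv.span B"
    using K_span K by (auto simp: real_number_field_def)
  define n where "n = card B"
  define S where "S = (\<lambda>i. \<alpha> ^ i) ` {0..n}"
  show ?thesis
  proof (cases "inj_on (\<lambda>i. \<alpha> ^ i) {0..n}")
    case False
    then obtain i j where ij: "i \<in> {0..n}" "j \<in> {0..n}" "i \<noteq> j" "\<alpha>^i = \<alpha>^j"
      unfolding inj_on_def by blast
    define p :: "rat poly" where "p = monom 1 i - monom 1 j"
    have "coeff p i = 1" using ij by (simp add: p_def coeff_monom)
    then have "p \<noteq> 0" by auto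
    moreover have "poly (map_poly of_rat p) \<alpha> = 0"
      using ij by (simp add: p_def map_poly_monom poly_monom mp_diff)
    ultimately show ?thesis by blast
  next
    case True
    have "S \<subseteq> K" unfolding S_def using a sf sf_power by blast
    have cS: "card S = n + 1" unfolding S_def using card_image[OF True] by simp
    have "rv.dependent S"
    proof (rule ccontr)
      assume "\<not> rv.dependent S"
      from rv.independent_span_bound[OF B(1) this] \<open>S \<subseteq> K\<close> B(3) cS n_def show False by auto
    qed
    moreover have fS: "finite S" unfolding S_def by simp
    ultimately obtain u where u: "\<exists>v\<in>S. u v \<noteq> 0" "(\<Sum>v\<in>S. of_rat (u v) * v) = 0"
      using rv.dependent_finite by blast
    define p :: "rat poly" where "p = (\<Sum>i\<in>{0..n}. monom (u (\<alpha>^i)) i)"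
    have cp: "coeff p i = (if i \<le> n then u (\<alpha>^i) else 0)" for i
      by (simp add: p_def coeff_sum coeff_monom)
    from u(1) obtain i where i: "i \<le> n" "u (\<alpha>^i) \<noteq> 0" unfolding S_def by auto
    have "p \<noteq> 0" using cp[of i] i by auto
    have "poly (map_poly of_rat p) \<alpha> = (\<Sum>i\<in>{0..n}. of_rat (u (\<alpha>^i)) * \<alpha>^i)"
      by (simp add: p_def mp_sum map_poly_monom poly_sum poly_monom)
    also have "\<dots> = (\<Sum>v\<in>S. of_rat (u v) * v)"
      unfolding S_def by (subst sum.reindex[OF True]) simp
    finally show ?thesis using u(2) \<open>p \<noteq> 0\<close> by auto
  qed
qed


definition Fc :: "real set \<Rightarrow> complex set" where "Fc F = complex_of_real ` F"
definition Fpoly :: "real set \<Rightarrow> complex poly \<Rightarrow> bool" where "Fpoly F p \<longleftrightarrow> (\<forall>i. coeff p i \<in> Fc F)"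


context fixes F assumes sf: "subfield_of_real F" begin

lemma cf_0: "0 \<in> Fc F" using sf_0[OF sf] unfolding Fc_def by force
lemma cf_1: "1 \<in> Fc F" using sf_1[OF sf] unfolding Fc_def by force
lemma cf_add: "x \<in> Fc F \<Longrightarrow> y \<in> Fc F \<Longrightarrow> x + y \<in> Fc F"
  using sf_add[OF sf] unfolding Fc_def by (force simp flip: of_real_add)
lemma cf_mult: "x \<in> Fc F \<Longrightarrow> y \<in> Fc F \<Longrightarrow> x * y \<in> Fc F"
  using sf_mult[OF sf] unfolding Fc_def by (force simp flip: of_real_mult)
lemma cf_uminus: "x \<in> Fc F \<Longrightarrow> - x \<in> Fc F"
  using sf_uminus[OF sf] unfolding Fc_def by (force simp flip: of_real_minus)
lemma cf_diff: "x \<in> Fc F \<Longrightarrow> y \<in> Fc F \<Longrightarrow> x - y \<in> Fc F"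
  using sf_diff[OF sf] unfolding Fc_def by (force simp flip: of_real_diff)
lemma cf_divide: "x \<in> Fc F \<Longrightarrow> y \<in> Fc F \<Longrightarrow> x / y \<in> Fc F"
  using sf_divide[OF sf] unfolding Fc_def by (force simp flip: of_real_divide)
lemma cf_of_real: "x \<in> F \<Longrightarrow> complex_of_real x \<in> Fc F" unfolding Fc_def by auto
lemma cf_of_nat: "of_nat n \<in> Fc F" using cf_of_real[OF sf_of_nat[OF sf, of n]] by simp
lemma cf_of_rat: "of_rat r \<in> Fc F" using cf_of_real[OF sf_of_rat[OF sf, of r]] by (simp add: of_real_of_rat_c)
lemma cf_sum: "(\<And>x. x \<in> A \<Longrightarrow> f x \<in> Fc F) \<Longrightarrow> sum f A \<in> Fc F"
  by (induction A rule: infinite_finite_induct) (auto intro: cf_add cf_0)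

lemma fp_0: "Fpoly F 0" by (simp add: Fpoly_def cf_0)
lemma fp_const: "c \<in> Fc F \<Longrightarrow> Fpoly F [:c:]" by (simp add: Fpoly_def coeff_pCons cf_0 split: nat.split)
lemma fp_pCons: "c \<in> Fc F \<Longrightarrow> Fpoly F p \<Longrightarrow> Fpoly F (pCons c p)"
  by (auto simp: Fpoly_def coeff_pCons split: nat.split)
lemma fp_add: "Fpoly F p \<Longrightarrow> Fpoly F q \<Longrightarrow> Fpoly F (p + q)" by (simp add: Fpoly_def cf_add)
lemma fp_diff: "Fpoly F p \<Longrightarrow> Fpoly F q \<Longrightarrow> Fpoly F (p - q)" by (simp add: Fpoly_def cf_diff)
lemma fp_smult: "c \<in> Fc F \<Longrightarrow> Fpoly F q \<Longrightarrow> Fpoly F (smult c q)" by (simp add: Fpoly_def cf_mult)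
lemma fp_mult: "Fpoly F p \<Longrightarrow> Fpoly F q \<Longrightarrow> Fpoly F (p * q)"
  unfolding Fpoly_def coeff_mult by (auto intro!: cf_sum cf_mult)
lemma fp_monom: "c \<in> Fc F \<Longrightarrow> Fpoly F (monom c n)" by (simp add: Fpoly_def coeff_monom cf_0)
lemma fp_pcompose: "Fpoly F p \<Longrightarrow> Fpoly F q \<Longrightarrow> Fpoly F (pcompose p q)"
proof (induction p)
  case (pCons a p)
  have "a \<in> Fc F" "Fpoly F p" using pCons.prems(1) unfolding Fpoly_def
    by (metis coeff_pCons_0, metis coeff_pCons_Suc)
  then show ?case using pCons by (simp add: pcompose_pCons fp_add fp_const fp_mult)
qed (simp add: fp_0)
lemma fp_ratpoly: "Fpoly F (map_poly of_rat p)"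
  by (simp add: Fpoly_def coeff_map_poly cf_of_rat)

lemma reduce:
  assumes "Fpoly F p" "Fpoly F r" "p \<noteq> 0" "r \<noteq> 0" "degree r \<le> degree p"
  shows "\<exists>c k. c \<in> Fc F \<and> Fpoly F (p - smult c (monom 1 k * r)) \<and>
     (p - smult c (monom 1 k * r) = 0 \<or> degree (p - smult c (monom 1 k * r)) < degree p)"
proof -
  define c where "c = lead_coeff p / lead_coeff r"
  define k where "k = degree p - degree r"
  define q where "q = smult c (monom 1 k * r)"
  have cF: "c \<in> Fc F" unfolding c_def using assms(1,2) by (simp add: Fpoly_def cf_divide)
  have c0: "c \<noteq> 0" using assms by (simp add: c_def)
  have dq: "degree q = degree p" using assms c0
    by (simp add: q_def k_def degree_mult_eq degree_monom_eq)
  have dk: "degree p = k + degree r" using assms by (simp add: k_def)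
  have lq: "lead_coeff q = lead_coeff p" using assms c0 dq
    by (simp add: q_def c_def dk coeff_monom_mult)
  have "Fpoly F (p - q)" unfolding q_def using assms cF
    by (intro fp_diff fp_smult fp_mult fp_monom cf_1) auto
  moreover have "p - q = 0 \<or> degree (p - q) < degree p"
  proof (cases "p - q = 0")
    case False
    have le: "degree (p - q) \<le> degree p" using degree_diff_le[of p "degree p" q] dq by simp
    have "coeff (p - q) (degree p) = 0" using lq dq by simp
    then have "degree (p - q) \<noteq> degree p" using False leading_coeff_0_iff by metis
    with le show ?thesis by simp
  qed simp
  ultimately show ?thesis using cF unfolding q_def by blast
qed

lemma euclid:
  "Fpoly F p \<Longrightarrow> Fpoly F r \<Longrightarrow> p \<noteq> 0 \<or> r \<noteq> 0 \<Longrightarrow>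
   \<exists>d u v. Fpoly F d \<and> d \<noteq> 0 \<and> d dvd p \<and> d dvd r \<and> d = u * p + v * r"
proof (induction "degree p + degree r" arbitrary: p r rule: less_induct)
  case less
  show ?case
  proof (cases "r = 0")
    case True
    then show ?thesis using less.prems by (rule_tac x=p in exI, rule_tac x=1 in exI) auto
  next
    case rnz: False
    show ?thesis
    proof (cases "p = 0")
      case True
      then show ?thesis using less.prems by (rule_tac x=r in exI, rule_tac x=0 in exI, rule_tac x=1 in exI) auto
    next
      case pnz: False
      show ?thesis
      proof (cases "degree r \<le> degree p")
        case True
        from reduce[OF less.prems(1,2) pnz rnz True] obtain c k where
          ck: "c \<in> Fc F" "Fpoly F (p - smult c (monom 1 k * r))"
            "p - smult c (monom 1 k * r) = 0 \<or> degree (p - smult c (monom 1 k * r)) < degree p" by blast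
        define p' where "p' = p - smult c (monom 1 k * r)"
        show ?thesis
        proof (cases "p' = 0")
          case True
          then have "p = smult c (monom 1 k * r)" by (simp add: p'_def)
          then have "r dvd p" by (metis dvd_smult dvd_triv_right)
          then show ?thesis using less.prems rnz
            by (rule_tac x=r in exI, rule_tac x=0 in exI, rule_tac x=1 in exI) auto
        next
          case False
          with ck(3) have "degree p' + degree r < degree p + degree r" by (simp add: p'_def)
          from less.hyps[OF this] ck(2) less.prems(2) False obtain d u v where
            d: "Fpoly F d" "d \<noteq> 0" "d dvd p'" "d dvd r" "d = u * p' + v * r"
            unfolding p'_def by blast
          have "p = p' + smult c (monom 1 k) * r" by (simp add: p'_def)
          moreover have "d dvd smult c (monom 1 k) * r" using d(4) by (rule dvd_mult)
          ultimately have "d dvd p" using d(3) by (metis dvd_add)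
          moreover have "d = u * p + (v - u * smult c (monom 1 k)) * r"
            using d(5) unfolding p'_def by (simp add: algebra_simps)
          ultimately show ?thesis using d by blast
        qed
      next
        case False
        then have dle: "degree p \<le> degree r" by simp
        from reduce[OF less.prems(2,1) rnz pnz dle] obtain c k where
          ck: "c \<in> Fc F" "Fpoly F (r - smult c (monom 1 k * p))"
            "r - smult c (monom 1 k * p) = 0 \<or> degree (r - smult c (monom 1 k * p)) < degree r" by blast
        define r' where "r' = r - smult c (monom 1 k * p)"
        show ?thesis
        proof (cases "r' = 0")
          case True
          then have "r = smult c (monom 1 k * p)" by (simp add: r'_def)
          then have "p dvd r" by (metis dvd_smult dvd_triv_right)
          then show ?thesis using less.prems pnz
            by (rule_tac x=p in exI, rule_tac x=1 in exI, rule_tac x=0 in exI) auto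
        next
          case False
          with ck(3) have "degree p + degree r' < degree p + degree r" by (simp add: r'_def)
          from less.hyps[OF this] ck(2) less.prems(1) False obtain d u v where
            d: "Fpoly F d" "d \<noteq> 0" "d dvd p" "d dvd r'" "d = u * p + v * r'"
            unfolding r'_def by blast
          have "r = r' + smult c (monom 1 k) * p" by (simp add: r'_def)
          moreover have "d dvd smult c (monom 1 k) * p" using d(3) by (rule dvd_mult)
          ultimately have "d dvd r" using d(4) by (metis dvd_add)
          moreover have "d = (u - v * smult c (monom 1 k)) * p + v * r"
            using d(5) unfolding r'_def by (simp add: algebra_simps)
          ultimately show ?thesis using d by blast
        qed
      qed
    qed
  qed
qed

end

lemma linpow_lead: "coeff ([:-b,1:]^j) j = (1::complex)"
  using lead_coeff_power[of "[:-b,1:]" j] degree_linear_power[of "-b" j] by simp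

lemma linpow_coeff: "coeff ([:-b,1:]^Suc j) j = - of_nat (Suc j) * (b::complex)"
proof (induction j)
  case 0
  then show ?case by simp
next
  case (Suc j)
  have "[:-b,1:]^Suc (Suc j) = [:-b,1:] * [:-b,1:]^Suc j" by simp
  also have "\<dots> = smult (-b) ([:-b,1:]^Suc j) + pCons 0 ([:-b,1:]^Suc j)"
    by (simp add: mult_pCons_left)
  finally have "coeff ([:-b,1:]^Suc (Suc j)) (Suc j) =
     -b * coeff ([:-b,1:]^Suc j) (Suc j) + coeff ([:-b,1:]^Suc j) j" by simp
  also have "\<dots> = -b - of_nat (Suc j) * b" by (simp only: Suc.IH linpow_lead) (simp add: algebra_simps)
  also have "\<dots> = - of_nat (Suc (Suc j)) * b" by (simp add: algebra_simps)
  finally show ?case .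
qed

lemma single_root:
  assumes "d \<noteq> 0" "{z. poly d z = 0} = {\<beta>::complex}"
  shows "\<exists>c m. c \<noteq> 0 \<and> m \<ge> 1 \<and> d = smult c ([:-\<beta>,1:]^m)"
proof -
  obtain q where q: "d = [:-\<beta>,1:]^order \<beta> d * q" "\<not> [:-\<beta>,1:] dvd q"
    using order_decomp[OF assms(1)] by blast
  have nr: "poly q z \<noteq> 0" for z
  proof
    assume "poly q z = 0"
    then have "poly d z = 0" by (subst q(1)) simp
    then have "z = \<beta>" using assms(2) by auto
    with \<open>poly q z = 0\<close> q(2) show False by (simp add: poly_eq_0_iff_dvd)
  qed
  then obtain c where c: "c \<noteq> 0" "q = [:c:]"
    using fundamental_theorem_of_algebra_alt[of q] by auto
  have "poly d \<beta> = 0" using assms(2) by auto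
  then have "order \<beta> d \<ge> 1" using q c by (cases "order \<beta> d") auto
  then show ?thesis using q c by (intro exI[of _ c] exI[of _ "order \<beta> d"]) auto
qed

lemma core:
  assumes sf: "subfield_of_real F" and h: "Fpoly F h" and k: "Fpoly F k" and "h \<noteq> 0"
    and roots: "{z. poly h z = 0 \<and> poly k z = 0} = {\<beta>}"
  shows "\<beta> \<in> Fc F"
proof -
  obtain d u v where d: "Fpoly F d" "d \<noteq> 0" "d dvd h" "d dvd k" "d = u * h + v * k"
    using euclid[OF sf h k] \<open>h \<noteq> 0\<close> by blast
  have "{z. poly d z = 0} = {z. poly h z = 0 \<and> poly k z = 0}"
  proof safe
    fix z assume "poly d z = 0"
    with d(3,4) show "poly h z = 0" "poly k z = 0" by (auto elim!: dvdE)
  next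
    fix z assume "poly h z = 0" "poly k z = 0"
    then show "poly d z = 0" by (subst d(5)) simp
  qed
  with roots obtain c m where cm: "c \<noteq> 0" "m \<ge> 1" "d = smult c ([:-\<beta>,1:]^m)"
    using single_root[OF d(2)] by auto
  obtain j where j: "m = Suc j" using cm(2) by (cases m) auto
  have c1: "coeff d m = c" using cm linpow_lead by simp
  have "coeff d j = c * coeff ([:-\<beta>,1:]^Suc j) j" using cm j by (simp del: power_Suc)
  also have "\<dots> = - c * of_nat m * \<beta>" by (simp only: j linpow_coeff) (simp add: algebra_simps)
  finally have c2: "coeff d j = - c * of_nat m * \<beta>" .
  have m0: "of_nat m \<noteq> (0::complex)" using j by (metis of_nat_eq_0_iff nat.simps(3))
  have "- coeff d j / (of_nat m * coeff d m) = (c * of_nat m * \<beta>) / (of_nat m * c)"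
    by (simp only: c1 c2) simp
  also have "\<dots> = \<beta>" using m0 cm(1) by simp
  finally have "\<beta> = - coeff d j / (of_nat m * coeff d m)" by simp
  moreover have "coeff d j \<in> Fc F" "coeff d m \<in> Fc F" using d(1) unfolding Fpoly_def by auto
  ultimately show ?thesis
    by (metis cf_divide cf_mult cf_of_nat cf_uminus sf)
qed


lemma mp_nz: "p \<noteq> 0 \<Longrightarrow> map_poly (of_rat :: rat \<Rightarrow> complex) p \<noteq> 0"
  by (metis coeff_map_poly leading_coeff_0_iff of_rat_eq_0_iff of_rat_0 coeff_0)

lemma Fc_real: "complex_of_real x \<in> Fc F \<Longrightarrow> x \<in> F"
  unfolding Fc_def by auto

lemma alg_c:
  assumes "real_number_field K" "\<alpha> \<in> K"
  obtains p :: "complex poly" where "p \<noteq> 0" "poly p (complex_of_real \<alpha>) = 0"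
    "\<And>F. subfield_of_real F \<Longrightarrow> Fpoly F p"
proof -
  obtain p0 :: "rat poly" where "p0 \<noteq> 0" "poly (map_poly of_rat p0) \<alpha> = 0"
    using algebraic_K[OF assms] by blast
  then show ?thesis using that[of "map_poly of_rat p0"] mp_nz fp_ratpoly poly_rat_complex[of p0 \<alpha>] by auto
qed

lemma rat_avoid:
  assumes "finite (E :: complex set)"
  shows "\<exists>q::rat. of_rat q \<notin> E"
proof (rule ccontr)
  assume "\<not> ?thesis"
  then have "range (of_rat :: rat \<Rightarrow> complex) \<subseteq> E" by auto
  then have "finite (range (of_rat :: rat \<Rightarrow> complex))" using assms finite_subset by auto
  moreover have "inj (of_rat :: rat \<Rightarrow> complex)" by (simp add: inj_def)
  ultimately have "finite (UNIV :: rat set)" using finite_imageD by blast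
  then show False using infinite_UNIV_char_0 by blast
qed

lemma pair:
  assumes K: "real_number_field K" and a: "\<alpha> \<in> K" and b: "\<beta> \<in> K"
  shows "\<exists>\<gamma>\<in>K. \<alpha> \<in> generated_subfield \<gamma> \<and> \<beta> \<in> generated_subfield \<gamma>"
proof -
  have sfK: "subfield_of_real K" using K by (simp add: real_number_field_def)
  obtain f where f: "f \<noteq> 0" "poly f (complex_of_real \<alpha>) = 0" "\<And>F. subfield_of_real F \<Longrightarrow> Fpoly F f"
    using alg_c[OF K a] by metis
  obtain h where h: "h \<noteq> 0" "poly h (complex_of_real \<beta>) = 0" "\<And>F. subfield_of_real F \<Longrightarrow> Fpoly F h"
    using alg_c[OF K b] by metis
  define ac where "ac = complex_of_real \<alpha>"
  define bc where "bc = complex_of_real \<beta>"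
  define E where "E = (\<lambda>(x,y). (x - ac) / (bc - y)) ` ({z. poly f z = 0} \<times> {z. poly h z = 0})"
  have "finite E" unfolding E_def using poly_roots_finite f(1) h(1) by auto
  then obtain q :: rat where q: "of_rat q \<notin> E" using rat_avoid by blast
  define \<gamma> where "\<gamma> = \<alpha> + of_rat q * \<beta>"
  have gK: "\<gamma> \<in> K" unfolding \<gamma>_def using sfK a b by (intro sf_add sf_mult sf_of_rat) auto
  define F where "F = generated_subfield \<gamma>"
  have sf: "subfield_of_real F" unfolding F_def by (rule L_subfield)
  have gF: "\<gamma> \<in> F" unfolding F_def by (rule L_mem)
  define gc where "gc = complex_of_real \<gamma>"
  have gc: "gc = ac + of_rat q * bc" unfolding gc_def ac_def bc_def \<gamma>_def
    by (simp add: of_real_of_rat_c)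
  define k where "k = pcompose f [:gc, - of_rat q:]"
  have pk: "poly k z = poly f (gc - of_rat q * z)" for z
    unfolding k_def by (simp add: poly_pcompose algebra_simps)
  have fk: "Fpoly F k" unfolding k_def
    by (intro fp_pcompose[OF sf] f(3)[OF sf] fp_pCons[OF sf] fp_const[OF sf] cf_uminus[OF sf]
        cf_of_rat[OF sf]) (simp add: gc_def cf_of_real[OF sf gF])
  have roots: "{z. poly h z = 0 \<and> poly k z = 0} = {bc}"
  proof safe
    show "poly h bc = 0" using h(2) bc_def by simp
    show "poly k bc = 0" using f(2) by (simp add: pk gc ac_def)
  next
    fix z assume z: "poly h z = 0" "poly k z = 0"
    show "z = bc"
    proof (rule ccontr)
      assume ne: "z \<noteq> bc"
      have "poly f (gc - of_rat q * z) = 0" using z pk by simp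
      then have "(gc - of_rat q * z - ac) / (bc - z) \<in> E" unfolding E_def using z(1) by force
      moreover have "(gc - of_rat q * z - ac) / (bc - z) = of_rat q"
        using ne by (simp add: gc field_simps)
      ultimately show False using q by simp
    qed
  qed
  have "bc \<in> Fc F" using core[OF sf h(3)[OF sf] fk h(1) roots] .
  then have bF: "\<beta> \<in> F" unfolding bc_def by (rule Fc_real)
  have "\<alpha> = \<gamma> - of_rat q * \<beta>" unfolding \<gamma>_def by simp
  then have "\<alpha> \<in> F" using sf gF bF by (metis sf_diff sf_mult sf_of_rat)
  with bF gK show ?thesis unfolding F_def by blast
qed


lemma prim:
  assumes K: "real_number_field K"
  shows "\<exists>\<delta>\<in>K. generated_subfield \<delta> = K"
proof -
  have sfK: "subfield_of_real K" using K by (simp add: real_number_field_def)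
  obtain B where B: "finite B" "B \<subseteq> K" "K = {\<Sum>b\<in>B. of_rat (c b) * b | c :: real \<Rightarrow> rat. True}"
    using K unfolding real_number_field_def finite_over_rat_def by blast
  have "\<exists>\<delta>\<in>K. S \<subseteq> generated_subfield \<delta>" if "finite S" "S \<subseteq> K" for S
    using that
  proof (induction S rule: finite_induct)
    case empty
    then show ?case using sf_0[OF sfK] by blast
  next
    case (insert x S)
    then obtain \<delta> where d: "\<delta> \<in> K" "S \<subseteq> generated_subfield \<delta>" by auto
    obtain \<gamma> where g: "\<gamma> \<in> K" "\<delta> \<in> generated_subfield \<gamma>" "x \<in> generated_subfield \<gamma>"
      using pair[OF K d(1), of x] insert.prems by auto
    have "generated_subfield \<delta> \<subseteq> generated_subfield \<gamma>" using L_least[OF L_subfield g(2)] .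
    then show ?case using d g by blast
  qed
  from this[OF B(1,2)] obtain \<delta> where d: "\<delta> \<in> K" "B \<subseteq> generated_subfield \<delta>" by blast
  have "K \<subseteq> generated_subfield \<delta>"
  proof
    fix y assume "y \<in> K"
    then obtain c where "y = (\<Sum>b\<in>B. of_rat (c b) * b)" using B(3) by blast
    then show "y \<in> generated_subfield \<delta>" using d(2)
      by (auto intro!: sf_sum[OF L_subfield] sf_mult[OF L_subfield] sf_of_rat[OF L_subfield])
  qed
  moreover have "generated_subfield \<delta> \<subseteq> K" using L_least[OF sfK d(1)] .
  ultimately show ?thesis using d(1) by blast
qed


theorem lemma3p4:
  fixes K :: "real set" and a' b' :: real
  assumes "real_number_field K"
    and "a' \<in> K" and "b' \<in> K" and "a' \<noteq> 0" and "b' \<noteq> 0"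
  shows "\<exists>g' x y z. g' \<in> K \<and> generated_subfield g' = K \<and>
           x \<in> K \<and> y \<in> K \<and> z \<in> K \<and>
           a' * x\<^sup>2 + b' * y\<^sup>2 - a' * b' * z\<^sup>2 = g'"
proof -
  note K = assms(1)
  have sfK: "subfield_of_real K" using K by (simp add: real_number_field_def)
  obtain \<delta> where d: "\<delta> \<in> K" "generated_subfield \<delta> = K" using prim[OF K] by blast
  obtain f where f: "f \<noteq> 0" "poly f (complex_of_real a') = 0" "\<And>F. subfield_of_real F \<Longrightarrow> Fpoly F f"
    using alg_c[OF K assms(2)] by metis
  obtain h where h: "h \<noteq> 0" "poly h (complex_of_real \<delta>) = 0" "\<And>F. subfield_of_real F \<Longrightarrow> Fpoly F h"
    using alg_c[OF K d(1)] by metis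
  define ac where "ac = complex_of_real a'"
  define dc where "dc = complex_of_real \<delta>"
  have ac0: "ac \<noteq> 0" using assms(4) by (simp add: ac_def)
  define P where "P = (\<lambda>(a,b). [: ac * b^2 - a * dc^2, 2 * (ac * b - a * dc), ac - a :])"
  define R where "R = Set.filter (\<lambda>(a,b). b \<noteq> dc) ({z. poly f z = 0} \<times> {z. poly h z = 0})"
  define E where "E = insert (- dc) (\<Union>ab\<in>R. {q. poly (P ab) q = 0})"
  have Pnz: "P (a,b) \<noteq> 0" if "b \<noteq> dc" for a b
  proof (cases "ac = a")
    case True
    then have "coeff (P (a,b)) 1 = 2 * ac * (b - dc)" by (simp add: P_def algebra_simps)
    also have "\<dots> \<noteq> 0" using ac0 that by simp
    finally show ?thesis by auto
  next
    case False
    then have "coeff (P (a,b)) 2 \<noteq> 0" by (simp add: P_def numeral_2_eq_2)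
    then show ?thesis by auto
  qed
  have "finite ({z. poly f z = 0} \<times> {z. poly h z = 0})" using poly_roots_finite f(1) h(1) by auto
  then have "finite R" unfolding R_def by (rule finite_filter)
  moreover have "finite {q. poly (P ab) q = 0}" if "ab \<in> R" for ab
    using that Pnz poly_roots_finite unfolding R_def by (cases ab) auto
  ultimately have "finite E" unfolding E_def by auto
  then obtain q :: rat where q: "of_rat q \<notin> E" using rat_avoid by blast
  define \<theta> where "\<theta> = \<delta> + of_rat q"
  define tc where "tc = complex_of_real \<theta>"
  have tc: "tc = dc + of_rat q" unfolding tc_def dc_def \<theta>_def by (simp add: of_real_of_rat_c)
  have t0: "\<theta> \<noteq> 0"
  proof
    assume "\<theta> = 0"
    then have "dc + of_rat q = 0" using tc unfolding tc_def by simp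
    then have "of_rat q = - dc" by (metis add_eq_0_iff)
    then show False using q unfolding E_def by auto
  qed
  have tK: "\<theta> \<in> K" unfolding \<theta>_def using sfK d(1) by (intro sf_add sf_of_rat) auto
  define g where "g = \<theta>^2 / a'"
  have gK: "g \<in> K" unfolding g_def using sfK tK assms(2) by (intro sf_divide sf_power) auto
  define F where "F = generated_subfield g"
  have sf: "subfield_of_real F" unfolding F_def by (rule L_subfield)
  have gF: "g \<in> F" unfolding F_def by (rule L_mem)
  define gc where "gc = complex_of_real g"
  have gc: "gc = tc^2 / ac" unfolding gc_def tc_def ac_def g_def by simp
  have gc0: "gc \<noteq> 0" using t0 assms(4) unfolding gc_def g_def by simp
  define h' where "h' = pcompose h [:- of_rat q, 1:]"
  have ph': "poly h' z = poly h (z - of_rat q)" for z unfolding h'_def by (simp add: poly_pcompose)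
  have h'0: "h' \<noteq> 0"
  proof
    assume "h' = 0"
    then have "poly h z = 0" for z using ph'[of "z + of_rat q"] by simp
    then show False using h(1) poly_all_0_iff_0 by blast
  qed
  have fh': "Fpoly F h'" unfolding h'_def
    by (intro fp_pcompose[OF sf] h(3)[OF sf] fp_pCons[OF sf] fp_const[OF sf] cf_uminus[OF sf]
        cf_of_rat[OF sf] cf_1[OF sf])
  define k where "k = pcompose f [:0, 0, 1 / gc:]"
  have pk: "poly k z = poly f (z^2 / gc)" for z
    unfolding k_def by (simp add: poly_pcompose power2_eq_square)
  have fk: "Fpoly F k" unfolding k_def
    by (intro fp_pcompose[OF sf] f(3)[OF sf] fp_pCons[OF sf] fp_const[OF sf] cf_0[OF sf]
        cf_divide[OF sf] cf_1[OF sf]) (simp add: gc_def cf_of_real[OF sf gF])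
  have roots: "{z. poly h' z = 0 \<and> poly k z = 0} = {tc}"
  proof safe
    show "poly h' tc = 0" using h(2) by (simp add: ph' tc dc_def)
    have "tc^2 / gc = ac" using gc ac0 t0 gc0 unfolding tc_def by (simp add: field_simps)
    then show "poly k tc = 0" using f(2) by (simp add: pk ac_def)
  next
    fix z assume z: "poly h' z = 0" "poly k z = 0"
    define b where "b = z - of_rat q"
    define a where "a = z^2 / gc"
    have hb: "poly h b = 0" using z(1) ph' b_def by simp
    have fa: "poly f a = 0" using z(2) pk a_def by simp
    show "z = tc"
    proof (rule ccontr)
      assume ne: "z \<noteq> tc"
      then have bd: "b \<noteq> dc" using tc b_def by auto
      then have "(a,b) \<in> R" unfolding R_def using hb fa by auto
      moreover have "poly (P (a,b)) (of_rat q) = 0"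
      proof -
        have "poly (P (a,b)) (of_rat q) = ac * (b + of_rat q)^2 - a * (dc + of_rat q)^2"
          by (simp add: P_def algebra_simps power2_eq_square)
        also have "\<dots> = ac * z^2 - a * tc^2" using tc b_def by simp
        also have "\<dots> = 0" unfolding a_def gc using ac0 t0 unfolding tc_def by (simp add: field_simps)
        finally show ?thesis .
      qed
      ultimately have "of_rat q \<in> E" unfolding E_def by blast
      then show False using q by simp
    qed
  qed
  have "tc \<in> Fc F" using core[OF sf fh' fk h'0 roots] .
  then have "\<theta> \<in> F" unfolding tc_def by (rule Fc_real)
  then have "\<delta> \<in> F" using sf unfolding \<theta>_def by (metis add_diff_cancel_right' sf_diff sf_of_rat)
  then have "K \<subseteq> F" using L_least[OF sf] d(2) by blast
  moreover have "F \<subseteq> K" unfolding F_def using L_least[OF sfK gK] .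
  ultimately have GK: "generated_subfield g = K" unfolding F_def by blast
  have xK: "\<theta> / a' \<in> K" using sfK tK assms(2) by (rule sf_divide)
  have "a' * (\<theta> / a')\<^sup>2 + b' * 0\<^sup>2 - a' * b' * 0\<^sup>2 = g"
    unfolding g_def using assms(4) by (simp add: power2_eq_square field_simps)
  then show ?thesis using gK GK xK sf_0[OF sfK] by blast
qed

end
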